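(* Let $k\ge2$ and $n\ge1$, and let $h_k$ be the complete homogeneous symmetric polynomial of degree $k$ in $x_1,\dots,x_n$. Then $\{\partial h_k/\partial x_i\mid i=1,\dots,n\}$ is a (homogeneous) system of parameters for $\mathbb{C}[x_1,\dots,x_n]$. *)

theory Defs
  imports Complex_Main "HOL-Library.Poly_Mapping"
begin

text \<open>Polynomials over the complex numbers in the variables x_0, x_1, ...:
  a monomial is a finitely supported exponent vector (finitely supported nat => nat),
  a polynomial is a finitely supported coefficient map on monomials.
  Multiplication is the convolution product of Poly_Mapping, so this is
  the commutative ring C[x_0, x_1, ...].  The ring C[x_1..x_n] of the paper is
  the subring of polynomials in the first n variables (indices 0..n-1).\<close>

type_synonym mpoly = "(nat \<Rightarrow>\<^sub>0 nat) \<Rightarrow>\<^sub>0 complex"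

definition mdeg :: "(nat \<Rightarrow>\<^sub>0 nat) \<Rightarrow> nat" where
  "mdeg m = (\<Sum>i\<in>Poly_Mapping.keys m. Poly_Mapping.lookup m i)"

definition const_poly :: "complex \<Rightarrow> mpoly" where
  "const_poly c = Poly_Mapping.single 0 c"

definition in_vars :: "nat \<Rightarrow> mpoly \<Rightarrow> bool" where
  "in_vars n p \<longleftrightarrow> (\<forall>m\<in>Poly_Mapping.keys p. Poly_Mapping.keys m \<subseteq> {..<n})"

definition homogeneous :: "nat \<Rightarrow> mpoly \<Rightarrow> bool" where
  "homogeneous d p \<longleftrightarrow> (\<forall>m\<in>Poly_Mapping.keys p. mdeg m = d)"

definition complete_hom :: "nat \<Rightarrow> nat \<Rightarrow> mpoly" where
  "complete_hom n k =
     (\<Sum>m\<in>{m. Poly_Mapping.keys m \<subseteq> {..<n} \<and> mdeg m = k}. Poly_Mapping.single m 1)"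

definition pderiv_var :: "nat \<Rightarrow> mpoly \<Rightarrow> mpoly" where
  "pderiv_var i p =
     (\<Sum>m\<in>Poly_Mapping.keys p. Poly_Mapping.single (m - Poly_Mapping.single i 1)
                     (of_nat (Poly_Mapping.lookup m i) * Poly_Mapping.lookup p m))"

definition gen_ideal :: "nat \<Rightarrow> (nat \<Rightarrow> mpoly) \<Rightarrow> mpoly set" where
  "gen_ideal n f = {\<Sum>i<n. g i * f i | g. \<forall>i<n. in_vars n (g i)}"

definition finite_dim_quotient :: "nat \<Rightarrow> mpoly set \<Rightarrow> bool" where
  "finite_dim_quotient n I \<longleftrightarrow>
     (\<exists>B. finite B \<and> (\<forall>b\<in>B. in_vars n b) \<and>
        (\<forall>p. in_vars n p \<longrightarrow>
           (\<exists>c. p - (\<Sum>b\<in>B. const_poly (c b) * b) \<in> I)))"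

text \<open>f_0..f_{n-1} is a homogeneous system of parameters of C[x_0..x_{n-1}]
  (which has Krull dimension n): n homogeneous elements of positive degree
  such that the quotient by the ideal they generate has Krull dimension 0,
  i.e. is finite-dimensional over C.\<close>
definition hom_sop :: "nat \<Rightarrow> (nat \<Rightarrow> mpoly) \<Rightarrow> bool" where
  "hom_sop n f \<longleftrightarrow>
     (\<forall>i<n. in_vars n (f i) \<and> (\<exists>d>0. homogeneous d (f i))) \<and>
     finite_dim_quotient n (gen_ideal n f)"

end

theory Submission imports Defs "HOL-Library.FuncSet" begin

abbreviation lk where "lk \<equiv> Poly_Mapping.lookup"
abbreviation ks where "ks \<equiv> Poly_Mapping.keys"
abbreviation sg where "sg \<equiv> Poly_Mapping.single"

lemma lk_single: "lk (sg a c) b = (if a = b then c else 0)"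
  by (simp add: lookup_single when_def)

lemma mdeg_sum: "finite S \<Longrightarrow> ks a \<subseteq> S \<Longrightarrow> mdeg a = (\<Sum>i\<in>S. lk a i)"
  unfolding mdeg_def
  by (rule sum.mono_neutral_left) (auto simp: in_keys_iff)

lemma mdeg_add: "mdeg (a + b) = mdeg a + mdeg b"
proof -
  let ?S = "ks a \<union> ks b"
  have "ks (a+b) \<subseteq> ?S" by (rule keys_add)
  then have "mdeg (a+b) = (\<Sum>i\<in>?S. lk (a+b) i)" by (intro mdeg_sum) auto
  also have "\<dots> = (\<Sum>i\<in>?S. lk a i) + (\<Sum>i\<in>?S. lk b i)" by (simp add: lookup_add sum.distrib)
  also have "\<dots> = mdeg a + mdeg b" by (subst (1 2) mdeg_sum[of ?S]) auto
  finally show ?thesis .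
qed

lemma mdeg_single: "mdeg (sg i m) = m"
  unfolding mdeg_def by simp

lemma lk_le_mdeg: "lk a i \<le> mdeg a"
proof (cases "i \<in> ks a")
  case True
  then show ?thesis unfolding mdeg_def by (intro member_le_sum) auto
qed (simp add: in_keys_iff)

definition e :: "nat \<Rightarrow> nat \<Rightarrow>\<^sub>0 nat" where "e i = sg i 1"

lemma lk_e: "lk (e i) j = (if i = j then 1 else 0)"
  by (simp add: e_def lk_single)

lemma sub_add_e: "lk a i \<ge> 1 \<Longrightarrow> (a - e i) + e i = a"
  by (rule poly_mapping_eqI) (auto simp: lookup_add lookup_minus lk_e le_add_diff_inverse2)

lemma sub_add_N: "lk (a::nat\<Rightarrow>\<^sub>0nat) i \<ge> N \<Longrightarrow> (a - sg i N) + sg i N = a"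
  by (rule poly_mapping_eqI) (auto simp: lookup_add lookup_minus lk_single le_add_diff_inverse2)

lemma add_sub_e: "(a + e i) - e i = a"
  by (rule poly_mapping_eqI) (auto simp: lookup_add lookup_minus lk_e)

lemma keys_add_e: "ks (a + e i) = insert i (ks a)"
  by (auto simp: in_keys_iff lookup_add lk_e split: if_splits)

lemma mdeg_e: "mdeg (e i) = 1"
  by (simp add: e_def mdeg_single)

lemma keys_sub: "ks (a - b) \<subseteq> ks (a::nat \<Rightarrow>\<^sub>0 nat)"
  by (auto simp: in_keys_iff lookup_minus)

lemma finite_bounded: "finite V \<Longrightarrow> finite {a::nat\<Rightarrow>\<^sub>0nat. ks a \<subseteq> V \<and> (\<forall>i. lk a i \<le> K)}"
proof -
  assume fV: "finite V"
  let ?A = "{a::nat\<Rightarrow>\<^sub>0nat. ks a \<subseteq> V \<and> (\<forall>i. lk a i \<le> K)}"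
  let ?f = "\<lambda>a::nat\<Rightarrow>\<^sub>0nat. restrict (lk a) V"
  have inj: "inj_on ?f ?A"
  proof (rule inj_onI)
    fix a b assume a: "a \<in> ?A" and b: "b \<in> ?A" and eq: "?f a = ?f b"
    show "a = b"
    proof (rule poly_mapping_eqI)
      fix i show "lk a i = lk b i"
      proof (cases "i \<in> V")
        case True
        have "restrict (lk a) V i = restrict (lk b) V i" using eq by simp
        with True show ?thesis by simp
      next
        case False
        then have "i \<notin> ks a" "i \<notin> ks b" using a b by auto
        then show ?thesis by (simp add: in_keys_iff)
      qed
    qed
  qed
  have "?f ` ?A \<subseteq> PiE V (\<lambda>_. {..K})" by auto
  moreover have "finite (PiE V (\<lambda>_. {..K}))" using fV by (intro finite_PiE) auto
  ultimately have "finite (?f ` ?A)" by (rule finite_subset)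
  then show ?thesis using inj by (rule finite_imageD)
qed

definition M :: "nat set \<Rightarrow> nat \<Rightarrow> (nat \<Rightarrow>\<^sub>0 nat) set" where
  "M V m = {a. ks a \<subseteq> V \<and> mdeg a = m}"

lemma finite_M: "finite V \<Longrightarrow> finite (M V m)"
  unfolding M_def
  by (rule finite_subset[OF _ finite_bounded[of V m]]) (auto intro: order.trans[OF lk_le_mdeg])

lemma lk_sum_single: "finite A \<Longrightarrow> lk (\<Sum>a\<in>A. sg a (c a)) b = (if b \<in> A then c b else 0)"
  by (simp add: lookup_sum lk_single)

lemma poly_expand: "(p::mpoly) = (\<Sum>a\<in>ks p. sg a (lk p a))"
  by (rule poly_mapping_eqI) (auto simp: lk_sum_single in_keys_iff)

lemma lk_mult_single: "lk (sg m c * (p::mpoly)) a = (if m + (a - m) = a then c * lk p (a - m) else 0)"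
proof -
  have "sg m c * p = (\<Sum>b\<in>ks p. sg (m + b) (c * lk p b))"
    by (subst (1) poly_expand[of p]) (simp add: sum_distrib_left mult_single)
  then have "lk (sg m c * p) a = (\<Sum>b\<in>ks p. if m + b = a then c * lk p b else 0)"
    by (simp add: lookup_sum lk_single)
  also have "\<dots> = (\<Sum>b\<in>ks p. if b = a - m \<and> m + (a - m) = a then c * lk p b else 0)"
    by (rule sum.cong) auto
  also have "\<dots> = (if m + (a - m) = a then c * lk p (a - m) else 0)"
    by (auto simp: sum.delta in_keys_iff)
  finally show ?thesis .
qed

definition X :: "nat \<Rightarrow> mpoly" where "X i = sg (e i) 1"

lemma cond_e: "(e i + (a - e i) = a) \<longleftrightarrow> lk a i \<ge> 1"
proof
  assume "e i + (a - e i) = a"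
  then have "lk (e i + (a - e i)) i = lk a i" by simp
  then show "lk a i \<ge> 1" by (simp add: lookup_add lookup_minus lk_e)
next
  assume "lk a i \<ge> 1" then show "e i + (a - e i) = a"
    by (metis sub_add_e add.commute)
qed

lemma lk_X_mult: "lk (X i * p) a = (if lk a i \<ge> 1 then lk p (a - e i) else 0)"
  unfolding X_def lk_mult_single cond_e by simp

lemma lk_of_nat_mult: "lk (of_nat c * (p::mpoly)) a = of_nat c * lk p a"
proof -
  have "(of_nat c :: mpoly) = sg 0 (of_nat c)" by (rule single_of_nat[symmetric])
  then have "lk (of_nat c * (p::mpoly)) a = lk (sg 0 (of_nat c) * p) a" by (simp only:)
  also have "\<dots> = of_nat c * lk p a" by (simp only: lk_mult_single) simp
  finally show ?thesis .
qed


definition hS :: "nat set \<Rightarrow> nat \<Rightarrow> mpoly" where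
  "hS V m = (\<Sum>a\<in>M V m. sg a 1)"

definition D :: "nat set \<Rightarrow> nat \<Rightarrow> nat \<Rightarrow> mpoly" where
  "D V i m = (\<Sum>a\<in>M V m. sg a (of_nat (lk a i + 1)))"

lemma lk_hS: "finite V \<Longrightarrow> lk (hS V m) a = (if a \<in> M V m then 1 else 0)"
  unfolding hS_def by (simp add: lk_sum_single finite_M)

lemma lk_D: "finite V \<Longrightarrow> lk (D V i m) a = (if a \<in> M V m then of_nat (lk a i + 1) else 0)"
  unfolding D_def by (simp add: lk_sum_single finite_M)

lemma lk_pderiv: "lk (pderiv_var i p) a = of_nat (lk a i + 1) * lk p (a + e i)"
proof -
  have "lk (pderiv_var i p) a =
     (\<Sum>m\<in>ks p. if m - e i = a then of_nat (lk m i) * lk p m else 0)"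
    unfolding pderiv_var_def e_def[symmetric] by (simp add: lookup_sum lk_single)
  also have "\<dots> = (\<Sum>m\<in>ks p. if m = a + e i then of_nat (lk m i) * lk p m else 0)"
  proof (rule sum.cong)
    fix m assume "m \<in> ks p"
    show "(if m - e i = a then of_nat (lk m i) * lk p m else 0) =
          (if m = a + e i then of_nat (lk m i) * lk p m else 0)"
    proof (cases "lk m i \<ge> 1")
      case True
      then have "m - e i = a \<longleftrightarrow> m = a + e i"
        using sub_add_e[OF True] add_sub_e by metis
      then show ?thesis by simp
    next
      case False
      then have "m \<noteq> a + e i" by (auto simp: lookup_add lk_e)
      then show ?thesis using False by simp
    qed
  qed simp
  also have "\<dots> = of_nat (lk a i + 1) * lk p (a + e i)"
    by (auto simp: in_keys_iff lookup_add lk_e)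
  finally show ?thesis .
qed

lemma M_add_e: "i \<in> V \<Longrightarrow> (a + e i \<in> M V (Suc m)) \<longleftrightarrow> a \<in> M V m"
  unfolding M_def by (simp add: keys_add_e mdeg_add mdeg_e)

lemma M_sub_e: "i \<in> V \<Longrightarrow> lk a i \<ge> 1 \<Longrightarrow> (a - e i \<in> M V m) \<longleftrightarrow> a \<in> M V (Suc m)"
  by (metis M_add_e sub_add_e)

lemma pderiv_hS: "finite V \<Longrightarrow> i \<in> V \<Longrightarrow> pderiv_var i (hS V (Suc m)) = D V i m"
  by (rule poly_mapping_eqI) (simp add: lk_pderiv lk_hS lk_D M_add_e)

lemma rel_a: "finite V \<Longrightarrow> i \<in> V \<Longrightarrow> D V i (Suc m) = hS V (Suc m) + X i * D V i m"
proof (rule poly_mapping_eqI)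
  fix a assume fV: "finite V" and iV: "i \<in> V"
  show "lk (D V i (Suc m)) a = lk (hS V (Suc m) + X i * D V i m) a"
  proof (cases "lk a i \<ge> 1")
    case True
    then show ?thesis using iV fV
      by (simp add: lookup_add lk_X_mult lk_D lk_hS M_sub_e lookup_minus lk_e)
  next
    case False
    then show ?thesis using iV fV
      by (simp add: lookup_add lk_X_mult lk_D lk_hS)
  qed
qed

lemma rel_b: "finite V \<Longrightarrow> of_nat (Suc m) * hS V (Suc m) = (\<Sum>i\<in>V. X i * D V i m)"
proof (rule poly_mapping_eqI)
  fix a assume fV: "finite V"
  have "lk (\<Sum>i\<in>V. X i * D V i m) a = (\<Sum>i\<in>V. if a \<in> M V (Suc m) then of_nat (lk a i) else 0)"
    unfolding lookup_sum
  proof (rule sum.cong)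
    fix i assume iV: "i \<in> V"
    show "lk (X i * D V i m) a = (if a \<in> M V (Suc m) then of_nat (lk a i) else 0)"
    proof (cases "lk a i \<ge> 1")
      case True
      then show ?thesis using iV fV
        by (simp add: lk_X_mult lk_D M_sub_e lookup_minus lk_e)
    next
      case False
      then show ?thesis using iV fV
        by (simp add: lk_X_mult)
    qed
  qed simp
  also have "\<dots> = (if a \<in> M V (Suc m) then of_nat (Suc m) else 0)"
  proof (cases "a \<in> M V (Suc m)")
    case True
    then have "mdeg a = (\<Sum>i\<in>V. lk a i)" using fV by (intro mdeg_sum) (auto simp: M_def)
    then show ?thesis using True by (simp add: M_def flip: of_nat_sum)
  qed simp
  finally show "lk (of_nat (Suc m) * hS V (Suc m)) a = lk (\<Sum>i\<in>V. X i * D V i m) a"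
    using fV by (simp add: lk_of_nat_mult lk_hS del: of_nat_Suc)
qed

lemma rel_c: "finite S \<Longrightarrow> i \<in> S \<Longrightarrow> hS S (Suc m) = hS (S - {i}) (Suc m) + X i * hS S m"
proof (rule poly_mapping_eqI)
  fix a assume fS: "finite S" and iS: "i \<in> S"
  show "lk (hS S (Suc m)) a = lk (hS (S - {i}) (Suc m) + X i * hS S m) a"
  proof (cases "lk a i \<ge> 1")
    case True
    then have "i \<in> ks a" by (simp add: in_keys_iff)
    then have "a \<notin> M (S - {i}) (Suc m)" by (auto simp: M_def)
    then show ?thesis using True iS fS
      by (simp add: lookup_add lk_X_mult lk_hS M_sub_e)
  next
    case False
    then have "a \<in> M (S - {i}) (Suc m) \<longleftrightarrow> a \<in> M S (Suc m)" by (auto simp: M_def in_keys_iff)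
    then show ?thesis using False iS fS
      by (simp add: lookup_add lk_X_mult lk_hS)
  qed
qed

lemma hS_single: "hS {i} m = sg (sg i m) 1"
proof -
  have "M {i} m = {sg i m}"
  proof safe
    fix a assume "a \<in> M {i} m"
    then have k: "ks a \<subseteq> {i}" and d: "mdeg a = m" by (auto simp: M_def)
    have "mdeg a = lk a i" using mdeg_sum[OF _ k] by simp
    show "a = sg i m"
      by (rule poly_mapping_eqI) (use k d \<open>mdeg a = lk a i\<close> in \<open>auto simp: lk_single in_keys_iff\<close>)
  qed (auto simp: M_def mdeg_single)
  then show ?thesis unfolding hS_def by simp
qed


lemma in_vars_iff: "in_vars n p \<longleftrightarrow> (\<forall>a. lk p a \<noteq> 0 \<longrightarrow> ks a \<subseteq> {..<n})"
  unfolding in_vars_def by (auto simp: in_keys_iff)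

lemma in_vars_0: "in_vars n 0" by (simp add: in_vars_def)
lemma in_vars_1: "in_vars n 1" by (simp add: in_vars_def)
lemma in_vars_add: "in_vars n p \<Longrightarrow> in_vars n q \<Longrightarrow> in_vars n (p + q)"
  unfolding in_vars_def using keys_add[of p q] by blast
lemma in_vars_sg: "ks a \<subseteq> {..<n} \<Longrightarrow> in_vars n (sg a c)"
  unfolding in_vars_iff by (auto simp: lk_single)
lemma in_vars_mult: "in_vars n p \<Longrightarrow> in_vars n q \<Longrightarrow> in_vars n (p * q)"
proof -
  assume p: "in_vars n p" and q: "in_vars n q"
  show ?thesis unfolding in_vars_def
  proof
    fix m assume "m \<in> ks (p * q)"
    then obtain a b where "m = a + b" "a \<in> ks p" "b \<in> ks q" using keys_mult by blast
    then show "ks m \<subseteq> {..<n}" using p q keys_add[of a b] unfolding in_vars_def by blast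
  qed
qed

context
  fixes n :: nat and f :: "nat \<Rightarrow> mpoly"
begin

lemma I_add: "a \<in> gen_ideal n f \<Longrightarrow> b \<in> gen_ideal n f \<Longrightarrow> a + b \<in> gen_ideal n f"
proof -
  assume "a \<in> gen_ideal n f" "b \<in> gen_ideal n f"
  then obtain g h where a: "a = (\<Sum>i<n. g i * f i)" "\<forall>i<n. in_vars n (g i)"
    and b: "b = (\<Sum>i<n. h i * f i)" "\<forall>i<n. in_vars n (h i)" unfolding gen_ideal_def by blast
  have "a + b = (\<Sum>i<n. (g i + h i) * f i)" using a b by (simp add: sum.distrib algebra_simps)
  moreover have "\<forall>i<n. in_vars n (g i + h i)" using a b by (simp add: in_vars_add)
  ultimately show ?thesis unfolding gen_ideal_def
    by (intro CollectI exI[of _ "\<lambda>i. g i + h i"]) simp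
qed

lemma I_mult: "in_vars n q \<Longrightarrow> a \<in> gen_ideal n f \<Longrightarrow> q * a \<in> gen_ideal n f"
proof -
  assume q: "in_vars n q" and "a \<in> gen_ideal n f"
  then obtain g where a: "a = (\<Sum>i<n. g i * f i)" "\<forall>i<n. in_vars n (g i)"
    unfolding gen_ideal_def by blast
  have "q * a = (\<Sum>i<n. (q * g i) * f i)" using a by (simp add: sum_distrib_left algebra_simps)
  moreover have "\<forall>i<n. in_vars n (q * g i)" using a q by (simp add: in_vars_mult)
  ultimately show ?thesis unfolding gen_ideal_def
    by (intro CollectI exI[of _ "\<lambda>i. q * g i"]) simp
qed

lemma I_0: "0 \<in> gen_ideal n f"
  unfolding gen_ideal_def using in_vars_0 by force

lemma I_sum: "(\<And>x. x \<in> A \<Longrightarrow> g x \<in> gen_ideal n f) \<Longrightarrow> sum g A \<in> gen_ideal n f"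
  by (induction A rule: infinite_finite_induct) (auto simp: I_0 I_add)

lemma I_gen: "i < n \<Longrightarrow> f i \<in> gen_ideal n f"
proof -
  assume i: "i < n"
  let ?g = "\<lambda>j. if j = i then 1 else 0 :: mpoly"
  have "(\<Sum>j<n. ?g j * f j) = (\<Sum>j<n. if j = i then f j else 0)" by (rule sum.cong) auto
  also have "\<dots> = f i" using i by simp
  finally have "(\<Sum>j<n. ?g j * f j) = f i" .
  moreover have "\<forall>j<n. in_vars n (?g j)" by (simp add: in_vars_0 in_vars_1)
  ultimately show ?thesis unfolding gen_ideal_def
    by (intro CollectI exI[of _ ?g]) simp
qed

lemma I_diff: "in_vars n q \<Longrightarrow> a \<in> gen_ideal n f \<Longrightarrow> b \<in> gen_ideal n f \<Longrightarrow> a - q * b \<in> gen_ideal n f"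
proof -
  assume "in_vars n q" "a \<in> gen_ideal n f" "b \<in> gen_ideal n f"
  moreover have "in_vars n (-1)" unfolding in_vars_def by simp
  ultimately have "(-1) * (q * b) \<in> gen_ideal n f" by (intro I_mult in_vars_mult) 
  then have "a + (-1) * (q * b) \<in> gen_ideal n f" using I_add[OF \<open>a \<in> _\<close>] by blast
  then show ?thesis by simp
qed

end



lemma in_vars_X: "i < n \<Longrightarrow> in_vars n (X i)"
  unfolding X_def by (rule in_vars_sg) (auto simp: e_def)

lemma const_inv: "const_poly (inverse (of_nat (Suc m))) * (of_nat (Suc m) * p) = p"
proof -
  have "(of_nat (Suc m) :: mpoly) = sg 0 (of_nat (Suc m))" by (rule single_of_nat[symmetric])
  then have "const_poly (inverse (of_nat (Suc m))) * (of_nat (Suc m) * p)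
      = (sg 0 (inverse (of_nat (Suc m))) * sg 0 (of_nat (Suc m))) * p"
    unfolding const_poly_def by (simp only: mult.assoc)
  also have "\<dots> = sg 0 (inverse (of_nat (Suc m)) * of_nat (Suc m)) * p"
    by (simp only: mult_single add_0)
  finally have calc: "const_poly (inverse (of_nat (Suc m))) * (of_nat (Suc m) * p)
      = sg 0 (inverse (of_nat (Suc m)) * of_nat (Suc m)) * p" .
  have inv1: "inverse (of_nat (Suc m)) * of_nat (Suc m) = (1::complex)"
    by (rule left_inverse, rule of_nat_neq_0)
  show ?thesis unfolding calc inv1 by simp
qed

lemma in_vars_const: "in_vars n (const_poly c)"
  unfolding const_poly_def by (rule in_vars_sg) simp

lemma keys_D: "finite V \<Longrightarrow> ks (D V i m) \<subseteq> M V m"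
  by (auto simp: in_keys_iff lk_D split: if_splits)

theorem corollary16:
  fixes n k :: nat
  assumes "k \<ge> 2" and "n \<ge> 1"
  shows "hom_sop n (\<lambda>i. pderiv_var i (complete_hom n k))"
proof -
  define V where "V = {..<n}"
  define F where "F = (\<lambda>i. pderiv_var i (complete_hom n k))"
  define I where "I = gen_ideal n F"
  obtain k' where k: "k = Suc k'" and k': "k' \<ge> 1" using assms(1) by (cases k) auto
  have fV: "finite V" by (simp add: V_def)
  have ch: "complete_hom n k = hS V (Suc k')" unfolding complete_hom_def hS_def M_def V_def k by simp
  have F: "F i = D V i k'" if "i < n" for i
    using pderiv_hS[OF fV, of i k'] that by (simp add: V_def F_def ch)
  have hS_step: "hS V (Suc m) \<in> I" if "\<forall>i<n. D V i m \<in> I" for m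
  proof -
    have "(\<Sum>i\<in>V. X i * D V i m) \<in> I"
      unfolding I_def by (rule I_sum, rule I_mult) (use that in \<open>auto simp: V_def I_def in_vars_X\<close>)
    then have "of_nat (Suc m) * hS V (Suc m) \<in> I" using rel_b[OF fV] by simp
    then have "const_poly (inverse (of_nat (Suc m))) * (of_nat (Suc m) * hS V (Suc m)) \<in> I"
      unfolding I_def by (rule I_mult[OF in_vars_const])
    then show ?thesis by (simp only: const_inv)
  qed
  have Dall: "\<forall>i<n. D V i m \<in> I" if "m \<ge> k'" for m
    using that
  proof (induction m rule: dec_induct)
    case base
    show ?case using I_gen[where n=n and f=F] F unfolding I_def by auto
  next
    case (step m)
    have h: "hS V (Suc m) \<in> I" by (rule hS_step[OF step.IH])
    show ?case
    proof (intro allI impI)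
      fix i assume i: "i < n"
      have "D V i (Suc m) = hS V (Suc m) + X i * D V i m"
        using rel_a[OF fV] i by (simp add: V_def)
      also have "\<dots> \<in> I" unfolding I_def
        by (rule I_add, use h I_def in simp, rule I_mult[OF in_vars_X[OF i]])
           (use step.IH i I_def in simp)
      finally show "D V i (Suc m) \<in> I" .
    qed
  qed
  have hV: "hS V m \<in> I" if mk: "m \<ge> k" for m
  proof -
    obtain m' where "m = Suc m'" "m' \<ge> k'" using mk k by (cases m) auto
    then show ?thesis using hS_step Dall by simp
  qed
  have hsub: "\<forall>S. S \<subseteq> V \<longrightarrow> card V - card S = j \<longrightarrow> (\<forall>m\<ge>k + j. hS S m \<in> I)" for j
  proof (induction j)
    case 0
    show ?case
    proof (intro allI impI)
      fix S m assume S: "S \<subseteq> V" "card V - card S = 0" and m: "k + 0 \<le> m"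
      have "card V \<le> card S" using S(2) by simp
      then have "S = V" using S(1) fV by (meson card_seteq)
      then show "hS S m \<in> I" using hV m by simp
    qed
  next
    case (Suc j)
    show ?case
    proof (intro allI impI)
      fix S m assume S: "S \<subseteq> V" "card V - card S = Suc j" and m: "k + Suc j \<le> m"
      have "S \<noteq> V" using S(2) by auto
      then obtain i where i: "i \<in> V" "i \<notin> S" using S(1) by blast
      define S' where "S' = insert i S"
      have fS: "finite S" using S(1) fV finite_subset by blast
      have S'V: "S' \<subseteq> V" using S(1) i by (auto simp: S'_def)
      have cS': "card S' = Suc (card S)" using fS i by (simp add: S'_def)
      have cV: "card S' \<le> card V" using S'V fV by (rule card_mono[rotated])
      have "card V - card S' = j" using S(2) cS' cV by simp
      then have IH: "\<forall>m\<ge>k + j. hS S' m \<in> I" using Suc.IH S'V by blast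
      obtain m'' where m'': "m = Suc m''" "m'' \<ge> k + j" using m by (cases m) auto
      have "hS S' (Suc m'') = hS S (Suc m'') + X i * hS S' m''"
        using rel_c[of S' i m''] fS i by (simp add: S'_def)
      then have "hS S m = hS S' (Suc m'') - X i * hS S' m''" using m'' by simp
      also have "\<dots> \<in> I" unfolding I_def
        by (rule I_diff) (use IH m'' i in \<open>auto simp: I_def V_def intro: in_vars_X\<close>)
      finally show "hS S m \<in> I" .
    qed
  qed
  define N where "N = k + n - 1"
  have xN: "sg (sg i N) 1 \<in> I" if "i < n" for i
  proof -
    have "card V - card {i} = n - 1" by (simp add: V_def)
    moreover have "{i} \<subseteq> V" using that by (simp add: V_def)
    ultimately have "hS {i} N \<in> I" using hsub[of "n - 1"] assms(2) by (simp add: N_def)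
    then show ?thesis by (simp add: hS_single)
  qed
  have high: "sg a c \<in> I" if "ks a \<subseteq> V" "i < n" "lk a i \<ge> N" for a c i
  proof -
    have "sg a c = sg (a - sg i N) c * sg (sg i N) 1"
      by (simp add: mult_single sub_add_N[OF that(3)])
    also have "\<dots> \<in> I" unfolding I_def
      by (rule I_mult) (use that keys_sub[of a "sg i N"] xN[OF that(2)] in \<open>auto simp: I_def V_def intro!: in_vars_sg\<close>)
    finally show ?thesis .
  qed
  have fdq: "finite_dim_quotient n I"
  proof -
    define A where "A = {a::nat\<Rightarrow>\<^sub>0nat. ks a \<subseteq> V \<and> (\<forall>j. lk a j \<le> N - 1)}"
    define sg1 where "sg1 = (\<lambda>a::nat\<Rightarrow>\<^sub>0nat. sg a (1::complex))"
    define B where "B = sg1 ` A"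
    have fA: "finite A" unfolding A_def by (rule finite_bounded[OF fV])
    have inj: "inj_on sg1 A" unfolding sg1_def
      by (rule inj_onI) (metis lookup_single_eq lookup_single_not_eq one_neq_zero)
    show ?thesis unfolding finite_dim_quotient_def
    proof (intro exI conjI allI impI ballI)
      show "finite B" using fA by (simp add: B_def)
      fix b assume "b \<in> B"
      then show "in_vars n b" by (auto simp: B_def A_def sg1_def V_def intro!: in_vars_sg)
    next
      fix p assume p: "in_vars n p"
      let ?c = "\<lambda>b. lk p (inv_into A sg1 b)"
      have "(\<Sum>b\<in>B. const_poly (?c b) * b) = (\<Sum>a\<in>A. const_poly (?c (sg1 a)) * sg1 a)"
        unfolding B_def using sum.reindex[OF inj] by (simp add: comp_def)
      also have "\<dots> = (\<Sum>a\<in>A. sg a (lk p a))"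
        by (rule sum.cong[OF refl], subst inv_into_f_f[OF inj], assumption)
           (simp add: const_poly_def sg1_def mult_single)
      also have "\<dots> = (\<Sum>a\<in>A \<inter> ks p. sg a (lk p a))"
        by (rule sum.mono_neutral_right) (auto simp: fA in_keys_iff)
      finally have low: "(\<Sum>b\<in>B. const_poly (?c b) * b) = (\<Sum>a\<in>ks p \<inter> A. sg a (lk p a))"
        by (simp add: Int_commute)
      have "p = (\<Sum>a\<in>ks p. sg a (lk p a))" by (rule poly_expand)
      also have "\<dots> = (\<Sum>a\<in>ks p \<inter> A. sg a (lk p a)) + (\<Sum>a\<in>ks p - A. sg a (lk p a))"
        by (rule sum.Int_Diff) simp
      finally have "p - (\<Sum>b\<in>B. const_poly (?c b) * b) = (\<Sum>a\<in>ks p - A. sg a (lk p a))"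
        using low by (simp add: algebra_simps)
      also have "\<dots> \<in> I"
      proof (rule I_sum[where n=n and f=F, folded I_def])
        fix a assume a: "a \<in> ks p - A"
        then have kV: "ks a \<subseteq> V" using p by (auto simp: in_vars_def V_def)
        have N1: "N \<ge> 1" using assms by (simp add: N_def)
        have "\<not> (\<forall>j. lk a j \<le> N - 1)" using a kV by (auto simp: A_def)
        then obtain j where "lk a j > N - 1" by (auto simp: not_le)
        then have j: "lk a j \<ge> N" using N1 by simp
        have "j \<in> ks a" using j N1 by (auto simp: in_keys_iff)
        then have "j < n" using kV by (auto simp: V_def)
        then show "sg a (lk p a) \<in> I" using high kV j by blast
      qed
      finally show "p - (\<Sum>b\<in>B. const_poly (?c b) * b) \<in> I" .
    qed
  qed
  have hom: "in_vars n (F i) \<and> (\<exists>d>0. homogeneous d (F i))" if "i < n" for i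
  proof -
    have sub: "ks (F i) \<subseteq> M V k'" using F[OF that] keys_D[OF fV] by simp
    have "in_vars n (F i)" unfolding in_vars_def using sub by (auto simp: M_def V_def)
    moreover have "homogeneous k' (F i)" unfolding homogeneous_def using sub by (auto simp: M_def)
    ultimately show ?thesis using k' by (intro conjI exI[of _ k']) auto
  qed
  show ?thesis using hom fdq unfolding hom_sop_def I_def F_def by blast
qed

end
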